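(* Let $\epsilon\in(0,1)$, $u_0\in\mathbb{R}$, $h>0$, and let $(u_n)_{n\ge0}$ be a sequence of real numbers starting at $u_0$ and satisfying the implicit midpoint scheme $$\frac{u_n-u_{n-1}}{h}+\frac{1}{\epsilon^2}f\!\left(\frac{u_n+u_{n-1}}{2}\right)=0,\qquad n\ge1,\quad f(u)=u^3-u.$$ (i) If $u_0\in\{0,1,-1\}$ and $h\le2\epsilon^2$, then $u_n=\mathrm{sign}(u_0)$ for all $n\ge1$. (ii) If $u_0\notin\{0,1,-1\}$, define $h^*=h^*(u_0,\epsilon)=\frac{8\epsilon^2}{u_0^2+4|u_0|+3}$ if $|u_0|>1$ and $h^*=\epsilon^2$ if $0<|u_0|<1$. Then $h^*>0$ and for every $h\in(0,h^*]$ the sequence $(u_n)$ is monotone and converges to $\mathrm{sign}(u_0)$ as $n\to\infty$.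
   Context: The scheme discretizes the ODE $u'(t)+\frac{1}{\epsilon^2}(u^3-u)=0$, $u(0)=u_0$. For $h\le2\epsilon^2$ each step equation has a unique real solution. Here $\mathrm{sign}(0)=0$. *)

theory Defs
  imports "HOL-Analysis.Analysis"
begin

definition f_AC :: "real \<Rightarrow> real" where
  "f_AC u = u ^ 3 - u"

definition midpoint_scheme :: "real \<Rightarrow> real \<Rightarrow> (nat \<Rightarrow> real) \<Rightarrow> bool" where
  "midpoint_scheme \<epsilon> h u \<longleftrightarrow>
     (\<forall>n\<ge>1. (u n - u (n - 1)) / h + (1 / \<epsilon>^2) * f_AC ((u n + u (n - 1)) / 2) = 0)"

definition h_star :: "real \<Rightarrow> real \<Rightarrow> real" where
  "h_star u0 \<epsilon> = (if \<bar>u0\<bar> > 1 then 8 * \<epsilon>^2 / (u0^2 + 4 * \<bar>u0\<bar> + 3) else \<epsilon>^2)"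

end

theory Submission
  imports Defs
begin

lemma scheme_step:
  assumes "midpoint_scheme \<epsilon> h u" "0 < h" "0 < \<epsilon>"
  shows "u (Suc n) - u n + (h/\<epsilon>^2) * f_AC ((u (Suc n) + u n)/2) = 0"
proof -
  have "(u (Suc n) - u n) / h + (1 / \<epsilon>^2) * f_AC ((u (Suc n) + u n) / 2) = 0"
    using assms(1) unfolding midpoint_scheme_def by (metis diff_Suc_1 le_add1 plus_1_eq_Suc)
  then have "h * ((u (Suc n) - u n) / h + (1 / \<epsilon>^2) * f_AC ((u (Suc n) + u n) / 2)) = 0" by simp
  then have "h * ((u (Suc n) - u n) / h) + h * ((1 / \<epsilon>^2) * f_AC ((u (Suc n) + u n) / 2)) = 0"
    by (simp only: distrib_left)
  then show ?thesis using assms(2) by simp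
qed

lemma fix_step:
  fixes a b k :: real
  assumes "b - a + k * f_AC ((a+b)/2) = 0" "0 < k" "k \<le> 2" "a \<in> {0,1,-1}"
  shows "b = a"
proof -
  define m where "m = (a+b)/2"
  have e: "2*(m-a) + k*(m^3-m) = 0" using assms(1) unfolding m_def f_AC_def by (simp add: field_simps)
  have fa: "a^3 - a = 0" using assms(4) by auto
  have "(m-a)*((2-k) + k*(m^2+m*a+a^2)) = 2*(m-a) + k*(m^3-m) - k*(a^3-a)"
    by (simp add: algebra_simps power2_eq_square power3_eq_cube)
  hence "(m-a)*((2-k) + k*(m^2+m*a+a^2)) = 0" using e fa by simp
  moreover have "m = a" if "(2-k) + k*(m^2+m*a+a^2) = 0"
  proof -
    have qq: "m^2+m*a+a^2 = (m + a/2)^2 + 3/4*a^2" by (simp add: algebra_simps power2_eq_square)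
    have q: "m^2+m*a+a^2 \<ge> 0" unfolding qq by (simp add: add_nonneg_nonneg)
    have "k*(m^2+m*a+a^2) \<ge> 0" using q assms(2) by simp
    hence "k*(m^2+m*a+a^2) = 0" using that assms(3) by linarith
    hence "m^2+m*a+a^2 = 0" using assms(2) by simp
    hence z: "(m + a/2)^2 + 3/4*a^2 = 0" using qq by simp
    have p1: "(m + a/2)^2 \<ge> 0" "a^2 \<ge> 0" by simp_all
    have "a^2 = 0" using z p1 by linarith
    hence "a = 0" by simp
    moreover have "(m + a/2)^2 = 0" using z p1 by linarith
    ultimately have "a = 0" "m + a/2 = 0" by simp_all
    thus ?thesis by simp
  qed
  ultimately have "m = a" by auto
  thus ?thesis unfolding m_def by simp
qed

lemma g_mono:
  fixes k m m' :: real
  assumes "0 < k" "k < 2" "m < m'"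
  shows "(2-k)*m + k*m^3 < (2-k)*m' + k*m'^3"
proof -
  have qq: "m^2+m*m'+m'^2 = (m + m'/2)^2 + 3/4*m'^2" by (simp add: algebra_simps power2_eq_square)
  have q: "m^2+m*m'+m'^2 \<ge> 0" unfolding qq by (simp add: add_nonneg_nonneg)
  have "k*(m^2+m*m'+m'^2) \<ge> 0" using q assms(1) by simp
  hence pos: "(2-k) + k*(m^2+m*m'+m'^2) > 0" using assms(2) by linarith
  have "((2-k)*m' + k*m'^3) - ((2-k)*m + k*m^3) = (m'-m)*((2-k) + k*(m^2+m*m'+m'^2))"
    by (simp add: algebra_simps power2_eq_square power3_eq_cube)
  also have "\<dots> > 0" using pos assms(3) by simp
  finally show ?thesis by simp
qed

lemma eq_m:
  fixes a b k :: real
  assumes "b - a + k * f_AC ((a+b)/2) = 0"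
  shows "(2-k)*((a+b)/2) + k*((a+b)/2)^3 = 2*a"
  using assms unfolding f_AC_def by (simp add: field_simps)

lemma step_lt1:
  fixes a b k :: real
  assumes "b - a + k * f_AC ((a+b)/2) = 0" "0 < k" "k \<le> 1" "0 < a" "a < 1"
  shows "a < b \<and> b < 1"
proof -
  define m where "m = (a+b)/2"
  have e: "(2-k)*m + k*m^3 = 2*a" using eq_m[OF assms(1)] unfolding m_def .
  have ga: "(2-k)*a + k*a^3 < 2*a"
  proof -
    have "a^3 < a" using assms(4,5) by (simp add: power3_eq_cube mult_less_cancel_right1 mult_le_cancel_left1)
      (smt (verit) mult_less_cancel_left2 mult_less_cancel_right1)
    hence "k*a^3 < k*a" using assms(2) by simp
    thus ?thesis by (simp add: algebra_simps)
  qed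
  have "m > a"
  proof (rule ccontr)
    assume "\<not> m > a"
    hence "m \<le> a" by simp
    hence "(2-k)*m + k*m^3 \<le> (2-k)*a + k*a^3"
      using g_mono[of k m a] assms(2,3) by (cases "m = a") auto
    thus False using e ga by simp
  qed
  define m0 where "m0 = (a+1)/2"
  have m0: "0 < m0" "m0 < 1" using assms(4,5) unfolding m0_def by simp_all
  have "m0*(1+m0) < 1*2" using m0 by (intro mult_strict_mono) auto
  moreover have "k*(m0*(1+m0)) \<le> 1*(m0*(1+m0))" using assms(3) m0 by (intro mult_right_mono) auto
  ultimately have "k*(m0*(1+m0)) < 2" by linarith
  hence "1 - k*m0*(1+m0)/2 > 0" by (simp add: mult.assoc)
  hence "(1-a)*(1 - k*m0*(1+m0)/2) > 0" using assms(5) by (intro mult_pos_pos) auto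
  moreover have "(2-k)*m0 + k*m0^3 - 2*a = (1-a)*(1 - k*m0*(1+m0)/2)"
    unfolding m0_def by (simp add: algebra_simps power2_eq_square power3_eq_cube field_simps)
  ultimately have g0: "(2-k)*m0 + k*m0^3 > 2*a" by simp
  have "m < m0"
  proof (rule ccontr)
    assume "\<not> m < m0"
    hence "m0 \<le> m" by simp
    hence "(2-k)*m0 + k*m0^3 \<le> (2-k)*m + k*m^3"
      using g_mono[of k m0 m] assms(2,3) by (cases "m = m0") auto
    thus False using e g0 by simp
  qed
  show ?thesis using \<open>m > a\<close> \<open>m < m0\<close> unfolding m_def m0_def by simp
qed

lemma step_gt1:
  fixes a b k :: real
  assumes "b - a + k * f_AC ((a+b)/2) = 0" "0 < k" "k * (a^2 + 4*a + 3) \<le> 8" "1 < a"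
  shows "1 \<le> b \<and> b \<le> a"
proof -
  define m where "m = (a+b)/2"
  have e: "(2-k)*m + k*m^3 = 2*a" using eq_m[OF assms(1)] unfolding m_def .
  have "a^2 + 4*a + 3 > 8" using assms(4)
    by (smt (verit) one_less_power pos2)
  hence "k*8 < k*(a^2 + 4*a + 3)" using assms(2) by (intro mult_strict_left_mono) auto
  hence k1: "k < 1" using assms(3) by linarith
  have "m \<le> a"
  proof (rule ccontr)
    assume "\<not> m \<le> a"
    hence ma: "m > a" by simp
    hence "m > 1" using assms(4) by simp
    hence "m^3 > m" by (simp add: power3_eq_cube)
      (smt (verit) mult_less_cancel_left1 one_less_power)
    hence "k*m^3 > k*m" using assms(2) by simp
    hence "(2-k)*m + k*m^3 > 2*m" by (simp add: algebra_simps)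
    thus False using e ma by simp
  qed
  define m0 where "m0 = (a+1)/2"
  have "(2-k)*m0 + k*m0^3 - 2*a = (1-a)*(1 - k*(a^2 + 4*a + 3)/8)"
    unfolding m0_def by (simp add: algebra_simps power2_eq_square power3_eq_cube field_simps)
  moreover have "(1-a)*(1 - k*(a^2 + 4*a + 3)/8) \<le> 0"
    using assms(3,4) by (simp add: mult_nonpos_nonneg)
  ultimately have g0: "(2-k)*m0 + k*m0^3 \<le> 2*a" by simp
  have "m \<ge> m0"
  proof (rule ccontr)
    assume "\<not> m \<ge> m0"
    hence "(2-k)*m + k*m^3 < (2-k)*m0 + k*m0^3"
      using g_mono[of k m m0] assms(2) k1 by simp
    thus False using e g0 by simp
  qed
  show ?thesis using \<open>m \<le> a\<close> \<open>m \<ge> m0\<close> unfolding m_def m0_def by simp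
qed


lemma limit_root:
  fixes u :: "nat \<Rightarrow> real"
  assumes "u \<longlonglongrightarrow> L" "\<And>n. u (Suc n) - u n + k * f_AC ((u (Suc n) + u n)/2) = 0" "k \<noteq> 0"
  shows "L^3 = L"
proof -
  have s: "(\<lambda>n. u (Suc n)) \<longlonglongrightarrow> L" using assms(1) by (rule LIMSEQ_Suc)
  have "(\<lambda>n. u (Suc n) - u n + k * ((u (Suc n) + u n)/2)^3 - k*((u (Suc n) + u n)/2))
      \<longlonglongrightarrow> L - L + k * ((L + L)/2)^3 - k*((L+L)/2)"
    using s assms(1) by (intro tendsto_intros) auto
  moreover have "(\<lambda>n. u (Suc n) - u n + k * ((u (Suc n) + u n)/2)^3 - k*((u (Suc n) + u n)/2)) = (\<lambda>n. 0)"
    using assms(2) unfolding f_AC_def by (simp add: algebra_simps)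
  ultimately have "(\<lambda>n. 0::real) \<longlonglongrightarrow> L - L + k * ((L + L)/2)^3 - k*((L+L)/2)" by simp
  hence "0 = L - L + k * ((L + L)/2)^3 - k*((L+L)/2)" using LIMSEQ_unique tendsto_const by blast
  moreover have "(L + L)/2 = L" by simp
  ultimately have "0 = k * L^3 - k * L" by simp
  hence "k * (L^3 - L) = 0" by (simp add: right_diff_distrib)
  thus ?thesis using assms(3) by (metis mult_eq_0_iff right_minus_eq)
qed

lemma pos_case:
  fixes u :: "nat \<Rightarrow> real"
  assumes eps: "0 < \<epsilon>" and u0: "0 < u0" "u0 \<noteq> 1" and h: "0 < h" "h \<le> h_star u0 \<epsilon>"
    and init: "u 0 = u0" and sch: "midpoint_scheme \<epsilon> h u"
  shows "(mono u \<or> antimono u) \<and> u \<longlonglongrightarrow> 1"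
proof -
  define k where "k = h / \<epsilon>^2"
  have kpos: "0 < k" unfolding k_def using h eps by simp
  have stp: "\<And>n. u (Suc n) - u n + k * f_AC ((u n + u (Suc n))/2) = 0"
    using scheme_step[OF sch h(1) eps] unfolding k_def by (simp add: add.commute)
  have stp': "\<And>n. u (Suc n) - u n + k * f_AC ((u (Suc n) + u n)/2) = 0"
    using scheme_step[OF sch h(1) eps] unfolding k_def by simp
  show ?thesis
  proof (cases "u0 < 1")
    case True
    have "h \<le> \<epsilon>^2" using h(2) True u0 unfolding h_star_def by simp
    hence k1: "k \<le> 1" unfolding k_def using eps by simp
    have inv: "0 < u n \<and> u n < 1 \<and> u n < u (Suc n)" for n
    proof (induction n)
      case 0
      have "0 < u 0" "u 0 < 1" using init u0 True by simp_all
      hence "u 0 < u (Suc 0) \<and> u (Suc 0) < 1"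
        using step_lt1[OF stp kpos k1] by simp
      then show ?case using init u0 True by simp
    next
      case (Suc n)
      have "u (Suc n) < 1" using step_lt1[OF stp kpos k1] Suc by simp
      moreover have "0 < u (Suc n)" using Suc by simp
      moreover have "u (Suc n) < u (Suc (Suc n))" using step_lt1[OF stp kpos k1] calculation by simp
      ultimately show ?case using Suc by simp
    qed
    have inc: "incseq u" using inv by (intro incseq_SucI) (simp add: less_imp_le)
    obtain L where L: "u \<longlonglongrightarrow> L" "\<forall>i. u i \<le> L"
      using incseq_convergent[OF inc, of 1] inv less_imp_le by blast
    have "L^3 = L" using limit_root[OF L(1) stp'] kpos by simp
    moreover have "L > 0" using L(2) inv[of 0] by (smt (verit))
    ultimately have "L * (L^2 - 1) = 0" by (simp add: algebra_simps power2_eq_square power3_eq_cube)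
    hence "L^2 = 1" using \<open>L > 0\<close> by simp
    hence "L = 1" using \<open>L > 0\<close> by (simp add: power2_eq_1_iff)
    thus ?thesis using inc L by simp
  next
    case False
    hence gt: "u0 > 1" using u0 by simp
    define D where "D = u0^2 + 4*u0 + 3"
    have Dpos: "D > 0" unfolding D_def using u0 by (simp add: add_pos_pos)
    have "h \<le> 8*\<epsilon>^2 / D" using h(2) gt unfolding h_star_def D_def by simp
    hence "h * D \<le> 8*\<epsilon>^2" using Dpos by (simp add: le_divide_eq)
    hence kD: "k * D \<le> 8" unfolding k_def using eps by (simp add: field_simps)
    have "D > 8" unfolding D_def using gt
      by (smt (verit) one_less_power pos2)
    hence "k*8 < k*D" using kpos by (intro mult_strict_left_mono) auto
    hence k1: "k < 1" using kD by linarith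
    have stepP: "1 \<le> u (Suc n) \<and> u (Suc n) \<le> u n" if a: "1 \<le> u n" "u n \<le> u0" for n
    proof (cases "u n = 1")
      case True
      have "u (Suc n) = u n" using fix_step[OF stp kpos] k1 True by simp
      then show ?thesis using True by simp
    next
      case False
      hence a1: "u n > 1" using a by simp
      have "u n ^2 \<le> u0^2" using a a1 by (intro power_mono) auto
      hence "u n^2 + 4*u n + 3 \<le> D" unfolding D_def using a by linarith
      hence "k * (u n^2 + 4*u n + 3) \<le> k * D" using kpos by (intro mult_left_mono) auto
      hence "k * (u n^2 + 4*u n + 3) \<le> 8" using kD by linarith
      then show ?thesis using step_gt1[OF stp kpos _ a1] by simp
    qed
    have inv: "1 \<le> u n \<and> u n \<le> u0" for n
    proof (induction n)
      case 0 then show ?case using init gt by simp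
    next
      case (Suc n) then show ?case using stepP[of n] by simp
    qed
    have dec: "decseq u" using inv stepP by (intro decseq_SucI) simp
    obtain L where L: "u \<longlonglongrightarrow> L" "\<forall>i. L \<le> u i"
      using decseq_convergent[OF dec, of 1] inv by blast
    have "1 \<le> L" using LIMSEQ_le_const[OF L(1), of 1] inv by simp
    have "L^3 = L" using limit_root[OF L(1) stp'] kpos by simp
    hence "L * (L^2 - 1) = 0" by (simp add: algebra_simps power2_eq_square power3_eq_cube)
    hence "L^2 = 1" using \<open>1 \<le> L\<close> by simp
    hence "L = 1" using \<open>1 \<le> L\<close> by (simp add: power2_eq_1_iff)
    thus ?thesis using dec L by simp
  qed
qed

lemma neg_scheme:
  assumes "midpoint_scheme \<epsilon> h u"
  shows "midpoint_scheme \<epsilon> h (\<lambda>n. - u n)"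
proof -
  have o: "f_AC (- x) = - f_AC x" for x unfolding f_AC_def by simp
  have ne: "(- u n - - u (n - 1)) / h + 1 / \<epsilon>^2 * f_AC ((- u n + - u (n - 1)) / 2)
     = - ((u n - u (n - 1)) / h + 1 / \<epsilon>^2 * f_AC ((u n + u (n - 1)) / 2))" for n
  proof -
    have e1: "(- u n + - u (n - 1)) / 2 = - ((u n + u (n - 1)) / 2)"
      by (simp only: minus_add_distrib[symmetric] minus_divide_left)
    have e2: "(- u n - - u (n - 1)) / h = - ((u n - u (n - 1)) / h)"
    proof -
      have "(- u n - - u (n - 1)) = - (u n - u (n - 1))" by simp
      thus ?thesis by (simp only: minus_divide_left)
    qed
    show ?thesis unfolding e1 e2 o by simp
  qed
  show ?thesis unfolding midpoint_scheme_def
  proof (intro allI impI)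
    fix n :: nat assume "1 \<le> n"
    hence "(u n - u (n - 1)) / h + 1 / \<epsilon>^2 * f_AC ((u n + u (n - 1)) / 2) = 0"
      using assms unfolding midpoint_scheme_def by blast
    thus "(- u n - - u (n - 1)) / h + 1 / \<epsilon>^2 * f_AC ((- u n + - u (n - 1)) / 2) = 0"
      by (simp only: ne)
  qed
qed

lemma part2:
  fixes u :: "nat \<Rightarrow> real"
  assumes eps: "0 < \<epsilon>" and u0: "u0 \<notin> {0, 1, -1}" and h: "0 < h" "h \<le> h_star u0 \<epsilon>" and init: "u 0 = u0"
    and sch: "midpoint_scheme \<epsilon> h u"
  shows "(mono u \<or> antimono u) \<and> u \<longlonglongrightarrow> sgn u0"
  proof (cases "u0 > 0")
    case True
    then show ?thesis using pos_case[OF eps True _ h init sch] u0 by simp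
  next
    case False
    hence neg: "0 < - u0" "- u0 \<noteq> 1" using u0 by auto
    have hs: "h_star (- u0) \<epsilon> = h_star u0 \<epsilon>" unfolding h_star_def by simp
    have r: "(mono (\<lambda>n. - u n) \<or> antimono (\<lambda>n. - u n)) \<and> (\<lambda>n. - u n) \<longlonglongrightarrow> 1"
      using pos_case[OF eps neg h(1) _ _ neg_scheme[OF sch]] h(2) hs init by simp
    have "mono u \<or> antimono u"
      using r unfolding mono_def antimono_def by auto
    moreover have "u \<longlonglongrightarrow> -1" using tendsto_minus[OF conjunct2[OF r]] by simp
    moreover have "sgn u0 = -1" using False neg by simp
    ultimately show ?thesis by simp
  qed

theorem theorem3p7:
  fixes \<epsilon> u0 :: real
  assumes "0 < \<epsilon>" and "\<epsilon> < 1"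
  shows "(u0 \<in> {0, 1, -1} \<longrightarrow>
            (\<forall>h (u :: nat \<Rightarrow> real). 0 < h \<longrightarrow> h \<le> 2 * \<epsilon>^2 \<longrightarrow>
               u 0 = u0 \<longrightarrow> midpoint_scheme \<epsilon> h u \<longrightarrow> (\<forall>n\<ge>1. u n = sgn u0)))
       \<and> (u0 \<notin> {0, 1, -1} \<longrightarrow>
            0 < h_star u0 \<epsilon> \<and>
            (\<forall>h (u :: nat \<Rightarrow> real). 0 < h \<longrightarrow> h \<le> h_star u0 \<epsilon> \<longrightarrow>
               u 0 = u0 \<longrightarrow> midpoint_scheme \<epsilon> h u \<longrightarrow>
               ((mono u \<or> antimono u) \<and> u \<longlonglongrightarrow> sgn u0)))"
  proof (intro conjI impI allI)
  fix h :: real and u :: "nat \<Rightarrow> real" and n :: nat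
  assume u0: "u0 \<in> {0, 1, -1}" and h: "0 < h" "h \<le> 2 * \<epsilon>^2" and init: "u 0 = u0"
    and sch: "midpoint_scheme \<epsilon> h u" and "1 \<le> n"
  define k where "k = h / \<epsilon>^2"
  have kpos: "0 < k" unfolding k_def using h assms(1) by simp
  have k2: "k \<le> 2" unfolding k_def using h assms(1) by (simp add: divide_le_eq)
  have stp: "\<And>n. u (Suc n) - u n + k * f_AC ((u n + u (Suc n))/2) = 0"
    using scheme_step[OF sch h(1) assms(1)] unfolding k_def by (simp add: add.commute)
  have all: "u m = u0" for m
  proof (induction m)
    case 0 then show ?case using init by simp
  next
    case (Suc m) then show ?case using fix_step[OF stp kpos k2] u0 by simp
  qed
  have "sgn u0 = u0" using u0 by auto
  then show "u n = sgn u0" using all by simp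
next
  assume u0: "u0 \<notin> {0, 1, -1}"
  have "0 < u0^2 + 4 * \<bar>u0\<bar> + 3" by (simp add: add_nonneg_pos)
  then show "0 < h_star u0 \<epsilon>" unfolding h_star_def using assms(1) by simp
next
  fix h :: real and u :: "nat \<Rightarrow> real"
  assume u0: "u0 \<notin> {0, 1, -1}" and h: "0 < h" "h \<le> h_star u0 \<epsilon>" and init: "u 0 = u0"
    and sch: "midpoint_scheme \<epsilon> h u"
  show "mono u \<or> antimono u" using part2[OF assms(1) u0 h init sch] by blast
next
  fix h :: real and u :: "nat \<Rightarrow> real"
  assume u0: "u0 \<notin> {0, 1, -1}" and h: "0 < h" "h \<le> h_star u0 \<epsilon>" and init: "u 0 = u0"
    and sch: "midpoint_scheme \<epsilon> h u"
  show "u \<longlonglongrightarrow> sgn u0" using part2[OF assms(1) u0 h init sch] by blast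
qed

end
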